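(* Let $n\ge1$, $L>0$, $\mu\in(0,1)$ and $\eta>4\mu n^2$. Let $p\in\{0,\dots,n-1\}$ and $x\in E_p$. Then $\nabla f_\mu(x)$, $\nabla h_\mu(x)$ and $\nabla h_\mu^*(x)$ all belong to $E_{p+1}$.
   Context: $(e_1,\dots,e_n)$ is the canonical basis, $E_p=\operatorname{Span}(e_1,\dots,e_p)$, $E_0=\{0\}$. Let $x_*=(1+\eta,1+\frac\eta2,\dots,1+\frac\eta n)$, $\hat f(x)=\|x-x_*\|_\infty$, $f_\mu(x)=\min_{u\in\mathbb{R}^n}\hat f(u)+\frac1{2\mu}\|x-u\|^2$ (Euclidean norm). Let $\phi_\mu:\mathbb{R}\to\mathbb{R}$, $\phi_\mu(t)=t-\mu/2$ if $t\ge\mu$ and $\phi_\mu(t)=t^2/(2\mu)$ otherwise; $d_\mu(x)=\frac\mu2\|x\|^2+\sum_{i=1}^n\phi_\mu(x^{(i)})$; and $h_\mu=\frac1L(f_\mu+d_\mu)$. $h_\mu^*$ denotes the convex conjugate of $h_\mu$, $h_\mu^*(y)=\sup_u\langle u,y\rangle-h_\mu(u)$, whose gradient is the inverse of $\nabla h_\mu$. *)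

theory Defs
  imports "HOL-Analysis.Analysis"
begin

text \<open>R^n is modelled as real^'n with 'n a finite linearly ordered index type;
  n = CARD('n). The coordinate i is the (pos i + 1)-th coordinate, where pos i
  counts the indices strictly below i (0-based position).\<close>

definition pos :: "'n::{finite,linorder} \<Rightarrow> nat" where
  "pos i = card {j. j < i}"

text \<open>E_p = Span(e_1,...,e_p): vectors whose coordinates at positions \<ge> p vanish.\<close>
definition Esp :: "nat \<Rightarrow> (real^'n::{finite,linorder}) set" where
  "Esp p = {x. \<forall>i. p \<le> pos i \<longrightarrow> x $ i = 0}"

definition xstar :: "real \<Rightarrow> real^'n::{finite,linorder}" where
  "xstar \<eta> = (\<chi> i. 1 + \<eta> / real (pos i + 1))"

definition fhat :: "real \<Rightarrow> real^'n::{finite,linorder} \<Rightarrow> real" where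
  "fhat \<eta> x = infnorm (x - xstar \<eta>)"

definition fmu :: "real \<Rightarrow> real \<Rightarrow> real^'n::{finite,linorder} \<Rightarrow> real" where
  "fmu \<eta> \<mu> x = (INF u. fhat \<eta> u + (1 / (2 * \<mu>)) * (norm (x - u))^2)"

definition phimu :: "real \<Rightarrow> real \<Rightarrow> real" where
  "phimu \<mu> t = (if t \<ge> \<mu> then t - \<mu> / 2 else t^2 / (2 * \<mu>))"

definition dmu :: "real \<Rightarrow> real^'n::{finite,linorder} \<Rightarrow> real" where
  "dmu \<mu> x = \<mu> / 2 * (norm x)^2 + (\<Sum>i\<in>UNIV. phimu \<mu> (x $ i))"

definition hmu :: "real \<Rightarrow> real \<Rightarrow> real \<Rightarrow> real^'n::{finite,linorder} \<Rightarrow> real" where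
  "hmu L \<eta> \<mu> x = (1 / L) * (fmu \<eta> \<mu> x + dmu \<mu> x)"

definition convex_conj :: "('a::real_inner \<Rightarrow> real) \<Rightarrow> 'a \<Rightarrow> real" where
  "convex_conj h y = (SUP u. inner u y - h u)"

definition has_gradient :: "('a::real_inner \<Rightarrow> real) \<Rightarrow> 'a \<Rightarrow> 'a \<Rightarrow> bool" where
  "has_gradient f g x \<longleftrightarrow> (f has_derivative (\<lambda>h. inner g h)) (at x)"

end

theory Submission
  imports Defs
begin


lemma grad_from_bound:
  fixes e :: "'a::real_inner \<Rightarrow> real"
  assumes C: "C \<ge> 0" and b: "\<And>k. \<bar>e (x+k) - e x - inner g k\<bar> \<le> C * (norm k)^2"
  shows "has_gradient e g x"
  unfolding has_gradient_def has_derivative_at_alt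
proof (intro conjI allI impI)
  show "bounded_linear (inner g)" by (rule bounded_linear_inner_right)
  fix \<epsilon> :: real assume "\<epsilon> > 0"
  show "\<exists>d>0. \<forall>y. norm (y - x) < d \<longrightarrow> norm (e y - e x - inner g (y - x)) \<le> \<epsilon> * norm (y - x)"
  proof (intro exI[of _ "\<epsilon>/(C+1)"] conjI allI impI)
    show "\<epsilon>/(C+1) > 0" using \<open>\<epsilon>>0\<close> C by simp
    fix y assume y: "norm (y - x) < \<epsilon>/(C+1)"
    have "norm (e y - e x - inner g (y - x)) \<le> C * (norm (y-x))^2"
      using b[of "y - x"] by simp
    also have "\<dots> \<le> (C+1) * norm (y-x) * norm (y-x)"
    proof -
      have nn: "0 \<le> norm (y-x) * norm (y-x)" by simp
      then show ?thesis by (simp add: power2_eq_square algebra_simps)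
    qed
    also have "\<dots> \<le> \<epsilon> * norm (y-x)"
    proof -
      have "(C+1) * norm (y-x) \<le> \<epsilon>" using y C by (simp add: field_simps)
      then show ?thesis by (simp add: mult_right_mono)
    qed
    finally show "norm (e y - e x - inner g (y - x)) \<le> \<epsilon> * norm (y - x)" .
  qed
qed

lemma aux1:
  fixes a D :: real assumes a: "a \<ge> 0" and D: "D > 0" shows "D / (2*(a+1)) * a < D"
proof -
  have pos: "0 < 2*(a+1)" using a by simp
  have "D * a < D * (2*(a+1))" using D a by (intro mult_strict_left_mono) auto
  hence "(D*a)/(2*(a+1)) < D" using pos by (simp add: divide_less_eq)
  thus ?thesis by simp
qed

lemma tangent_from_convex:
  fixes e :: "'a::real_inner \<Rightarrow> real"
  assumes conv: "\<And>a b t. 0 \<le> t \<Longrightarrow> t \<le> 1 \<Longrightarrow> e ((1-t) *\<^sub>R a + t *\<^sub>R b) \<le> (1-t) * e a + t * e b"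
  and C: "C \<ge> 0" and b: "\<And>k. e (x+k) - e x - inner g k \<ge> - C * (norm k)^2"
  shows "e y \<ge> e x + inner g (y - x)"
proof (rule ccontr)
  assume neg: "\<not> ?thesis"
  define D where "D = e x + inner g (y - x) - e y"
  define v where "v = y - x"
  have D: "D > 0" using neg by (simp add: D_def)
  define t where "t = min 1 (D / (2 * (C * (norm v)^2 + 1)))"
  have cv: "C * (norm v)^2 \<ge> 0" using C by simp
  have t0: "t > 0" using D cv by (simp add: t_def)
  have t1: "t \<le> 1" by (simp add: t_def)
  have eq: "(1-t) *\<^sub>R x + t *\<^sub>R y = x + t *\<^sub>R v" by (simp add: v_def algebra_simps)
  have "e (x + t *\<^sub>R v) \<le> (1-t) * e x + t * e y" using conv[OF less_imp_le[OF t0] t1, of x y] eq by simp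
  moreover have "e (x + t *\<^sub>R v) \<ge> e x + t * inner g v - C * t^2 * (norm v)^2"
    using b[of "t *\<^sub>R v"] t0 by (simp add: power_mult_distrib)
  ultimately have "t * e y \<ge> t * e x + t * inner g v - C * t^2 * (norm v)^2" by (simp add: algebra_simps)
  hence "t * (e y) \<ge> t * (e x + inner g v - C * t * (norm v)^2)" by (simp add: algebra_simps power2_eq_square)
  hence "e y \<ge> e x + inner g v - C * t * (norm v)^2" using t0 by simp
  hence "D \<le> C * t * (norm v)^2" by (simp add: D_def v_def)
  moreover have "C * t * (norm v)^2 < D"
  proof -
    have "C * t * (norm v)^2 = t * (C * (norm v)^2)" by simp
    also have "\<dots> \<le> (D / (2 * (C * (norm v)^2 + 1))) * (C * (norm v)^2)"
      by (rule mult_right_mono) (auto simp: t_def C)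
    also have "\<dots> < D" using aux1[OF cv D] .
    finally show ?thesis .
  qed
  ultimately show False by simp
qed

lemma lower_from_convex:
  fixes e :: "'a::real_inner \<Rightarrow> real"
  assumes conv: "\<And>a b t. 0 \<le> t \<Longrightarrow> t \<le> 1 \<Longrightarrow> e ((1-t) *\<^sub>R a + t *\<^sub>R b) \<le> (1-t) * e a + t * e b"
  and up: "\<And>k. e (x+k) \<le> e x + inner g k + C * (norm k)^2"
  shows "e (x+k) - e x - inner g k \<ge> - C * (norm k)^2"
proof -
  have "(1 - 1/2::real) *\<^sub>R (x+k) + (1/2) *\<^sub>R (x + -k) = (1/2::real) *\<^sub>R ((x+k) + (x + -k))"
    by (simp only: scaleR_add_right) simp
  also have "(x+k) + (x + -k) = 2 *\<^sub>R x" by (simp add: scaleR_2)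
  finally have hh: "(1 - 1/2::real) *\<^sub>R (x+k) + (1/2) *\<^sub>R (x + -k) = x" by simp
  have "e x \<le> (1/2) * e (x+k) + (1/2) * e (x + (-k))"
    using conv[of "1/2" "x+k" "x + (-k)"] unfolding hh by simp
  moreover have "e (x + (-k)) \<le> e x - inner g k + C * (norm k)^2" using up[of "-k"] by simp
  ultimately show ?thesis by simp
qed

definition dphi :: "real \<Rightarrow> real \<Rightarrow> real" where
  "dphi \<mu> t = (if t \<ge> \<mu> then 1 else t / \<mu>)"

lemma phi_nonneg: "\<mu> > 0 \<Longrightarrow> phimu \<mu> t \<ge> 0"
  by (auto simp: phimu_def)

lemma phi_tangent:
  assumes m: "\<mu> > 0" shows "phimu \<mu> y \<ge> phimu \<mu> t + dphi \<mu> t * (y - t)"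
proof (cases "t \<ge> \<mu>")
  case True
  then show ?thesis
  proof (cases "y \<ge> \<mu>")
    case False
    have "(y - \<mu>)^2 \<ge> 0" by simp
    hence "y^2/(2*\<mu>) \<ge> y - \<mu>/2" using m by (simp add: field_simps power2_eq_square)
    then show ?thesis using True False by (simp add: phimu_def dphi_def)
  qed (simp add: phimu_def dphi_def)
next
  case False
  then show ?thesis
  proof (cases "y \<ge> \<mu>")
    case True
    have "(\<mu> - t) * (2*y - \<mu> - t) \<ge> 0" using True False by simp
    hence "y - \<mu>/2 \<ge> t^2/(2*\<mu>) + t/\<mu> * (y - t)" using m by (simp add: field_simps power2_eq_square algebra_simps)
    then show ?thesis using True False by (simp add: phimu_def dphi_def)
  next
    case f2: False
    have "y^2/(2*\<mu>) - (t^2/(2*\<mu>) + t/\<mu> * (y - t)) = (y - t)^2/(2*\<mu>)" using m by (simp add: field_simps power2_eq_square)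
    moreover have "(y - t)^2/(2*\<mu>) \<ge> 0" using m by simp
    ultimately have "y^2/(2*\<mu>) \<ge> t^2/(2*\<mu>) + t/\<mu> * (y - t)" by linarith
    then show ?thesis using f2 False by (simp add: phimu_def dphi_def)
  qed
qed



lemma phi_upper:
  assumes m: "\<mu> > 0" shows "phimu \<mu> (t+s) \<le> phimu \<mu> t + dphi \<mu> t * s + s^2/(2*\<mu>)"
proof (cases "t \<ge> \<mu>")
  case True
  then show ?thesis
  proof (cases "t + s \<ge> \<mu>")
    case True
    then show ?thesis using \<open>t \<ge> \<mu>\<close> m by (simp add: phimu_def dphi_def)
  next
    case False
    have e: "(t - \<mu>/2 + s + s^2/(2*\<mu>)) - (t+s)^2/(2*\<mu>) = (\<mu> - t) * (2 * s + t - \<mu>) / (2*\<mu>)"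
      using m by (simp add: field_simps power2_eq_square)
    have "(\<mu> - t) * (2 * s + t - \<mu>) \<ge> 0" using True False by (intro mult_nonpos_nonpos) auto
    hence "(\<mu> - t) * (2 * s + t - \<mu>) / (2*\<mu>) \<ge> 0" using m by simp
    then show ?thesis using True False e by (simp add: phimu_def dphi_def)
  qed
next
  case False
  then show ?thesis
  proof (cases "t + s \<ge> \<mu>")
    case True
    have e: "(t+s)^2/(2*\<mu>) - (t + s - \<mu>/2) = (t + s - \<mu>)^2/(2*\<mu>)"
      using m by (simp add: field_simps power2_eq_square)
    have "(t + s - \<mu>)^2/(2*\<mu>) \<ge> 0" using m by simp
    moreover have "t^2/(2*\<mu>) + t/\<mu> * s + s^2/(2*\<mu>) = (t+s)^2/(2*\<mu>)"
      using m by (simp add: field_simps power2_eq_square)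
    ultimately show ?thesis using True False e by (simp add: phimu_def dphi_def)
  next
    case f2: False
    have "t^2/(2*\<mu>) + t/\<mu> * s + s^2/(2*\<mu>) = (t+s)^2/(2*\<mu>)"
      using m by (simp add: field_simps power2_eq_square)
    then show ?thesis using f2 False by (simp add: phimu_def dphi_def)
  qed
qed

definition gd :: "real \<Rightarrow> real^'n::{finite,linorder} \<Rightarrow> real^'n::{finite,linorder}" where
  "gd \<mu> u = \<mu> *\<^sub>R u + (\<chi> i. dphi \<mu> (u$i))"

lemma norm_add_sq: "(norm (u + k))^2 = (norm u)^2 + 2 * inner u k + (norm k)^2"
  for u k :: "'a::real_inner"
  by (simp add: power2_norm_eq_inner inner_simps inner_commute)

lemma norm_sq_sum: "(norm (k::real^'n))^2 = (\<Sum>i\<in>UNIV. (k$i)^2)"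
  unfolding power2_norm_eq_inner by (simp add: inner_vec_def power2_eq_square)

lemma inner_gd: "inner (gd \<mu> u) k = \<mu> * inner u k + (\<Sum>i\<in>UNIV. dphi \<mu> (u$i) * k$i)"
  by (simp add: gd_def inner_simps inner_vec_def sum_distrib_left sum.distrib algebra_simps)

lemma d_tangent:
  fixes u k :: "real^'n::{finite,linorder}"
  assumes m: "\<mu> > 0"
  shows "dmu \<mu> (u+k) \<ge> dmu \<mu> u + inner (gd \<mu> u) k + \<mu>/2 * (norm k)^2"
proof -
  have s: "(\<Sum>i\<in>UNIV. phimu \<mu> ((u+k)$i)) \<ge> (\<Sum>i\<in>UNIV. phimu \<mu> (u$i) + dphi \<mu> (u$i) * k$i)"
  proof (rule sum_mono)
    fix i show "phimu \<mu> (u$i) + dphi \<mu> (u$i) * k$i \<le> phimu \<mu> ((u+k)$i)"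
      using phi_tangent[OF m, where y="u$i + k$i" and t="u$i"] by simp
  qed
  show ?thesis unfolding dmu_def norm_add_sq inner_gd using s
    by (simp add: sum.distrib algebra_simps)
qed

lemma d_upper:
  fixes u k :: "real^'n::{finite,linorder}"
  assumes m: "\<mu> > 0"
  shows "dmu \<mu> (u+k) \<le> dmu \<mu> u + inner (gd \<mu> u) k + (\<mu>/2 + 1/(2*\<mu>)) * (norm k)^2"
proof -
  have s: "(\<Sum>i\<in>UNIV. phimu \<mu> ((u+k)$i)) \<le> (\<Sum>i\<in>UNIV. phimu \<mu> (u$i) + dphi \<mu> (u$i) * k$i + (k$i)^2/(2*\<mu>))"
  proof (rule sum_mono)
    fix i show "phimu \<mu> ((u+k)$i) \<le> phimu \<mu> (u$i) + dphi \<mu> (u$i) * k$i + (k$i)^2/(2*\<mu>)"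
      using phi_upper[OF m, of "u$i" "k$i"] by simp
  qed
  have n: "(\<Sum>i\<in>UNIV. (k$i)^2/(2*\<mu>)) = (norm k)^2/(2*\<mu>)"
    by (simp add: norm_sq_sum sum_divide_distrib)
  show ?thesis unfolding dmu_def norm_add_sq inner_gd using s n
    by (simp add: sum.distrib algebra_simps)
qed

lemma d_grad:
  fixes u :: "real^'n::{finite,linorder}"
  assumes m: "\<mu> > 0"
  shows "\<bar>dmu \<mu> (u+k) - dmu \<mu> u - inner (gd \<mu> u) k\<bar> \<le> (\<mu>/2 + 1/(2*\<mu>)) * (norm k)^2"
proof -
  have "\<mu>/2 * (norm k)^2 \<ge> 0" using m by simp
  then show ?thesis using d_tangent[OF m, of u k] d_upper[OF m, of u k] by simp
qed

lemma infnorm_le_cart: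
  fixes v :: "real^'n"
  assumes "\<And>i. \<bar>v$i\<bar> \<le> c" shows "infnorm v \<le> c"
  unfolding infnorm_cart by (rule cSup_least) (use assms in auto)

lemma infnorm_conv:
  fixes p q :: "'a::euclidean_space"
  assumes "0 \<le> t" "t \<le> 1"
  shows "infnorm ((1-t) *\<^sub>R p + t *\<^sub>R q) \<le> (1-t) * infnorm p + t * infnorm q"
proof -
  have "infnorm ((1-t) *\<^sub>R p + t *\<^sub>R q) \<le> infnorm ((1-t) *\<^sub>R p) + infnorm (t *\<^sub>R q)"
    by (rule infnorm_triangle)
  also have "\<dots> = (1-t) * infnorm p + t * infnorm q" using assms by (simp add: infnorm_mul)
  finally show ?thesis .
qed

lemma norm_sq_conv:
  fixes p q :: "'a::real_inner"
  assumes "0 \<le> t" "t \<le> 1"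
  shows "(norm ((1-t) *\<^sub>R p + t *\<^sub>R q))^2 \<le> (1-t) * (norm p)^2 + t * (norm q)^2"
proof -
  have e: "(1-t) * (norm p)^2 + t * (norm q)^2 - (norm ((1-t) *\<^sub>R p + t *\<^sub>R q))^2 = t*(1-t)*(norm (p - q))^2"
    unfolding power2_norm_eq_inner by (simp add: inner_simps inner_commute algebra_simps power2_eq_square)
  have "t*(1-t)*(norm (p - q))^2 \<ge> 0" using assms by simp
  then show ?thesis using e by simp
qed

lemma norm_axis_sq:
  fixes v :: "real^'n"
  shows "(norm (v + c *\<^sub>R axis i (1::real)))^2 = (norm v)^2 + 2 * c * v$i + c^2"
  unfolding norm_add_sq by (simp add: inner_axis power2_eq_square)



lemma pos_lt: "pos (i::'n::{finite,linorder}) < CARD('n)"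
  unfolding pos_def by (rule psubset_card_mono) auto

lemma pos_mono: "(i::'n::{finite,linorder}) < k \<Longrightarrow> pos i < pos k"
  unfolding pos_def by (rule psubset_card_mono) (auto intro: less_trans)

lemma pos_surj:
  assumes "p < CARD('n::{finite,linorder})" shows "\<exists>i::'n. pos i = p"
proof -
  have inj: "inj (pos :: 'n \<Rightarrow> nat)"
    by (rule injI) (metis neq_iff pos_mono less_irrefl)
  have sub: "range (pos :: 'n \<Rightarrow> nat) \<subseteq> {..<CARD('n)}" using pos_lt by auto
  have "card (range (pos :: 'n \<Rightarrow> nat)) = CARD('n)" using card_image[OF inj] by simp
  hence "range (pos :: 'n \<Rightarrow> nat) = {..<CARD('n)}"
    using sub by (intro card_subset_eq) auto
  then show ?thesis using assms by (metis imageE lessThan_iff)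
qed

lemma xstar_nth: "xstar \<eta> $ i = 1 + \<eta> / (real (pos i) + 1)"
  by (simp add: xstar_def)

lemma gap:
  fixes ip j :: "'n::{finite,linorder}"
  assumes m: "\<mu> > 0" and eta: "\<eta> > 4 * \<mu> * (real CARD('n))^2"
    and ip: "pos ip = p" and j: "pos j \<ge> p + 1"
  shows "xstar \<eta> $ j \<le> xstar \<eta> $ ip - 2*\<mu>" and "xstar \<eta> $ j \<ge> 0"
proof -
  define N where "N = real CARD('n)"
  define a where "a = real p + 1"
  define b where "b = real (pos j) + 1"
  have eta0: "\<eta> > 0" using eta m by (smt (verit) mult_pos_pos zero_less_power zero_less_card_finite of_nat_0_less_iff N_def)
  have a0: "a > 0" by (simp add: a_def)
  have N0: "N > 0" by (simp add: N_def)
  have ba: "b \<ge> a + 1" using j by (simp add: a_def b_def)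
  have bN: "b \<le> N" using pos_lt[of j] by (simp add: b_def N_def)
  have aN: "a + 1 \<le> N" using ba bN by simp
  have "a * (a+1) \<le> N * N" using aN a0 by (intro mult_mono) auto
  moreover have "0 < N*N*(a*(a+1))" using N0 a0 by simp
  ultimately have d1: "\<eta> / (N*N) \<le> \<eta> / (a*(a+1))" using eta0 a0 by (intro divide_left_mono) auto
  have "N > 0" by (simp add: N_def)
  hence d2: "\<eta> / (N*N) > 4*\<mu>" using eta by (simp add: N_def field_simps power2_eq_square)
  have d3: "\<eta>/b \<le> \<eta>/(a+1)" using ba a0 eta0 by (intro divide_left_mono) auto
  have d4: "\<eta>/a - \<eta>/(a+1) = \<eta>/(a*(a+1))" using a0 by (simp add: field_simps)
  have "xstar \<eta> $ ip - xstar \<eta> $ j = \<eta>/a - \<eta>/b" by (simp add: xstar_nth ip a_def b_def)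
  also have "\<dots> \<ge> 2*\<mu>" using d1 d2 d3 d4 m by linarith
  finally show "xstar \<eta> $ j \<le> xstar \<eta> $ ip - 2*\<mu>" by simp
  have "\<eta>/b \<ge> 0" using eta0 by (simp add: b_def)
  then show "xstar \<eta> $ j \<ge> 0" by (simp add: xstar_nth b_def)
qed

definition Fm :: "real \<Rightarrow> real \<Rightarrow> real^'n::{finite,linorder} \<Rightarrow> real^'n::{finite,linorder} \<Rightarrow> real" where
  "Fm \<eta> \<mu> u w = infnorm (w - xstar \<eta>) + 1/(2*\<mu>) * (norm (u - w))^2"

lemma fmu_alt: "fmu \<eta> \<mu> u = (INF w. Fm \<eta> \<mu> u w)"
  by (simp add: fmu_def fhat_def Fm_def)

lemma Fm_nonneg: "\<mu> > 0 \<Longrightarrow> Fm \<eta> \<mu> u w \<ge> 0"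
  by (simp add: Fm_def infnorm_pos_le)

lemma prox_exists:
  fixes u :: "real^'n::{finite,linorder}"
  assumes m: "\<mu> > 0" shows "\<exists>w. \<forall>w'. Fm \<eta> \<mu> u w \<le> Fm \<eta> \<mu> u w'"
proof -
  define c where "c = Fm \<eta> \<mu> u u"
  define R where "R = 2*\<mu>*c + 1"
  have c0: "c \<ge> 0" using Fm_nonneg[OF m] by (simp add: c_def)
  have R1: "R \<ge> 1" using c0 m by (simp add: R_def)
  have cont: "continuous_on (cball u R) (Fm \<eta> \<mu> u)" unfolding Fm_def by (intro continuous_intros)
  have ne: "cball u R \<noteq> {}" using R1 by auto
  obtain w where w: "w \<in> cball u R" "\<forall>y\<in>cball u R. Fm \<eta> \<mu> u w \<le> Fm \<eta> \<mu> u y"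
    using continuous_attains_inf[OF compact_cball ne cont] by blast
  have "Fm \<eta> \<mu> u w \<le> Fm \<eta> \<mu> u w'" for w'
  proof (cases "w' \<in> cball u R")
    case True then show ?thesis using w by auto
  next
    case False
    hence nr: "norm (u - w') > R" by (simp add: dist_norm)
    hence "norm (u - w') * norm (u - w') \<ge> norm (u - w') * 1" using R1 by (intro mult_left_mono) auto
    hence "(norm (u - w'))^2 > 2*\<mu>*c" using nr by (simp add: power2_eq_square R_def)
    hence "1/(2*\<mu>) * (norm (u - w'))^2 > c" using m by (simp add: field_simps)
    hence "Fm \<eta> \<mu> u w' > c" unfolding Fm_def using infnorm_pos_le[of "w' - xstar \<eta>"] by linarith
    moreover have "Fm \<eta> \<mu> u w \<le> c" using w R1 by (auto simp: c_def)
    ultimately show ?thesis by simp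
  qed
  then show ?thesis by blast
qed

lemma fmu_eq: "\<forall>w'. Fm \<eta> \<mu> u w \<le> Fm \<eta> \<mu> u w' \<Longrightarrow> fmu \<eta> \<mu> u = Fm \<eta> \<mu> u w"
  unfolding fmu_alt by (rule cInf_eq_minimum) auto

lemma fmu_le: "\<mu> > 0 \<Longrightarrow> fmu \<eta> \<mu> u \<le> Fm \<eta> \<mu> u w"
  unfolding fmu_alt by (rule cINF_lower) (auto intro!: bdd_belowI[where m=0] Fm_nonneg)

lemma fmu_nonneg: assumes m: "\<mu> > 0" shows "fmu \<eta> \<mu> u \<ge> 0"
proof -
  obtain w where "\<forall>w'. Fm \<eta> \<mu> u w \<le> Fm \<eta> \<mu> u w'" using prox_exists[OF m] by blast
  then show ?thesis using fmu_eq Fm_nonneg m by metis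
qed

lemma fmu_upper:
  assumes m: "\<mu> > 0" and w: "\<forall>w'. Fm \<eta> \<mu> u w \<le> Fm \<eta> \<mu> u w'"
  shows "fmu \<eta> \<mu> (u+k) \<le> fmu \<eta> \<mu> u + inner ((1/\<mu>) *\<^sub>R (u - w)) k + 1/(2*\<mu>) * (norm k)^2"
proof -
  have "fmu \<eta> \<mu> (u+k) \<le> Fm \<eta> \<mu> (u+k) w" by (rule fmu_le[OF m])
  also have "\<dots> = Fm \<eta> \<mu> u w + inner ((1/\<mu>) *\<^sub>R (u - w)) k + 1/(2*\<mu>) * (norm k)^2"
  proof -
    have "u + k - w = (u - w) + k" by simp
    hence eq: "(norm (u+k-w))^2 = (norm (u-w))^2 + 2 * inner (u-w) k + (norm k)^2" by (simp only: norm_add_sq)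
    have ii: "inner ((1/\<mu>) *\<^sub>R (u - w)) k = inner (u-w) k / \<mu>" by simp
    show ?thesis unfolding Fm_def eq ii using m by (simp add: field_simps)
  qed
  finally show ?thesis using fmu_eq[OF w] by simp
qed

lemma fmu_conv:
  fixes a b :: "real^'n::{finite,linorder}"
  assumes m: "\<mu> > 0" and t: "0 \<le> t" "t \<le> 1"
  shows "fmu \<eta> \<mu> ((1-t) *\<^sub>R a + t *\<^sub>R b) \<le> (1-t) * fmu \<eta> \<mu> a + t * fmu \<eta> \<mu> b"
proof -
  obtain wa where wa: "\<forall>w'. Fm \<eta> \<mu> a wa \<le> Fm \<eta> \<mu> a w'" using prox_exists[OF m] by blast
  obtain wb where wb: "\<forall>w'. Fm \<eta> \<mu> b wb \<le> Fm \<eta> \<mu> b w'" using prox_exists[OF m] by blast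
  have e1: "(1-t) *\<^sub>R wa + t *\<^sub>R wb - xstar \<eta> = (1-t) *\<^sub>R (wa - xstar \<eta>) + t *\<^sub>R (wb - xstar \<eta>)"
    by (simp add: algebra_simps)
  have e2: "(1-t) *\<^sub>R a + t *\<^sub>R b - ((1-t) *\<^sub>R wa + t *\<^sub>R wb) = (1-t) *\<^sub>R (a - wa) + t *\<^sub>R (b - wb)"
    by (simp add: algebra_simps)
  have "fmu \<eta> \<mu> ((1-t) *\<^sub>R a + t *\<^sub>R b) \<le> Fm \<eta> \<mu> ((1-t) *\<^sub>R a + t *\<^sub>R b) ((1-t) *\<^sub>R wa + t *\<^sub>R wb)"
    by (rule fmu_le[OF m])
  also have "\<dots> \<le> (1-t) * Fm \<eta> \<mu> a wa + t * Fm \<eta> \<mu> b wb"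
  proof -
    have i: "infnorm ((1-t) *\<^sub>R (wa - xstar \<eta>) + t *\<^sub>R (wb - xstar \<eta>)) \<le> (1-t) * infnorm (wa - xstar \<eta>) + t * infnorm (wb - xstar \<eta>)"
      by (rule infnorm_conv[OF t])
    have n: "(norm ((1-t) *\<^sub>R (a - wa) + t *\<^sub>R (b - wb)))^2 \<le> (1-t) * (norm (a - wa))^2 + t * (norm (b - wb))^2"
      by (rule norm_sq_conv[OF t])
    have n2: "1/(2*\<mu>) * (norm ((1-t) *\<^sub>R (a - wa) + t *\<^sub>R (b - wb)))^2 \<le> 1/(2*\<mu>) * ((1-t) * (norm (a - wa))^2 + t * (norm (b - wb))^2)"
      using n m by (intro mult_left_mono) auto
    have eqR: "(1-t) * Fm \<eta> \<mu> a wa + t * Fm \<eta> \<mu> b wb = ((1-t) * infnorm (wa - xstar \<eta>) + t * infnorm (wb - xstar \<eta>)) + 1/(2*\<mu>) * ((1-t) * (norm (a - wa))^2 + t * (norm (b - wb))^2)"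
      unfolding Fm_def by (simp add: algebra_simps add_divide_distrib[symmetric])
    have eqL: "Fm \<eta> \<mu> ((1-t) *\<^sub>R a + t *\<^sub>R b) ((1-t) *\<^sub>R wa + t *\<^sub>R wb) = infnorm ((1-t) *\<^sub>R (wa - xstar \<eta>) + t *\<^sub>R (wb - xstar \<eta>)) + 1/(2*\<mu>) * (norm ((1-t) *\<^sub>R (a - wa) + t *\<^sub>R (b - wb)))^2"
      unfolding Fm_def e1 e2 by (rule refl)
    show ?thesis using i n2 eqR eqL by linarith
  qed
  also have "\<dots> = (1-t) * fmu \<eta> \<mu> a + t * fmu \<eta> \<mu> b" using fmu_eq[OF wa] fmu_eq[OF wb] by simp
  finally show ?thesis .
qed

lemma fmu_bound:
  assumes m: "\<mu> > 0" and w: "\<forall>w'. Fm \<eta> \<mu> u w \<le> Fm \<eta> \<mu> u w'"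
  shows "\<bar>fmu \<eta> \<mu> (u+k) - fmu \<eta> \<mu> u - inner ((1/\<mu>) *\<^sub>R (u - w)) k\<bar> \<le> 1/(2*\<mu>) * (norm k)^2"
proof -
  have lo: "fmu \<eta> \<mu> (u+k) - fmu \<eta> \<mu> u - inner ((1/\<mu>) *\<^sub>R (u - w)) k \<ge> - (1/(2*\<mu>)) * (norm k)^2"
    apply (rule lower_from_convex[where e="fmu \<eta> \<mu>"])
     apply (erule (1) fmu_conv[OF m])
    apply (rule fmu_upper[OF m w])
    done
  show ?thesis using lo fmu_upper[OF m w, of k] by simp
qed

lemma fmu_tangent:
  assumes m: "\<mu> > 0" and w: "\<forall>w'. Fm \<eta> \<mu> u w \<le> Fm \<eta> \<mu> u w'"
  shows "fmu \<eta> \<mu> y \<ge> fmu \<eta> \<mu> u + inner ((1/\<mu>) *\<^sub>R (u - w)) (y - u)"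
proof (rule tangent_from_convex[where e="fmu \<eta> \<mu>" and C="1/(2*\<mu>)"])
  show "\<And>a b t. 0 \<le> t \<Longrightarrow> t \<le> 1 \<Longrightarrow> fmu \<eta> \<mu> ((1-t) *\<^sub>R a + t *\<^sub>R b) \<le> (1-t) * fmu \<eta> \<mu> a + t * fmu \<eta> \<mu> b"
    by (rule fmu_conv[OF m])
  show "0 \<le> 1/(2*\<mu>)" using m by simp
  show "\<And>k. fmu \<eta> \<mu> (u+k) - fmu \<eta> \<mu> u - inner ((1/\<mu>) *\<^sub>R (u - w)) k \<ge> - (1/(2*\<mu>)) * (norm k)^2"
  proof -
    fix k
    have "\<bar>fmu \<eta> \<mu> (u+k) - fmu \<eta> \<mu> u - inner ((1/\<mu>) *\<^sub>R (u - w)) k\<bar> \<le> 1/(2*\<mu>) * (norm k)^2"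
      by (rule fmu_bound[OF m w])
    then show "fmu \<eta> \<mu> (u+k) - fmu \<eta> \<mu> u - inner ((1/\<mu>) *\<^sub>R (u - w)) k \<ge> - (1/(2*\<mu>)) * (norm k)^2"
      by linarith
  qed
qed



lemma axis_comp: "(v + c *\<^sub>R axis i (1::real)) $ k = v $ k + (if k = i then c else 0)"
  by (simp add: axis_def)

lemma infnorm_axis_shift:
  fixes v :: "real^'n"
  shows "infnorm (v + c *\<^sub>R axis i 1) \<le> infnorm v + \<bar>c\<bar>"
proof -
  have "infnorm (c *\<^sub>R axis i (1::real)) \<le> \<bar>c\<bar>"
    by (rule infnorm_le_cart) (simp add: axis_def)
  then show ?thesis using infnorm_triangle[of v "c *\<^sub>R axis i 1"] by simp
qed

lemma prox_coord:
  fixes u w :: "real^'n::{finite,linorder}"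
  assumes m: "\<mu> > 0" and w: "\<forall>w'. Fm \<eta> \<mu> u w \<le> Fm \<eta> \<mu> u w'"
  shows "w$i \<le> u$i + \<mu>"
proof (rule ccontr)
  assume neg: "\<not> ?thesis"
  define a where "a = w$i - u$i"
  define \<delta> where "\<delta> = a - \<mu>"
  have a: "a > \<mu>" using neg by (simp add: a_def)
  have d0: "\<delta> > 0" using a by (simp add: \<delta>_def)
  define w' where "w' = w + (-\<delta>) *\<^sub>R axis i 1"
  have e1: "w' - xstar \<eta> = (w - xstar \<eta>) + (-\<delta>) *\<^sub>R axis i 1" by (simp add: w'_def algebra_simps)
  have e2: "u - w' = (u - w) + \<delta> *\<^sub>R axis i 1" by (simp add: w'_def algebra_simps)
  have i1: "infnorm (w' - xstar \<eta>) \<le> infnorm (w - xstar \<eta>) + \<delta>"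
    unfolding e1 using infnorm_axis_shift[of "w - xstar \<eta>" "-\<delta>" i] d0 by simp
  have n1: "(norm (u - w'))^2 = (norm (u - w))^2 - 2*\<delta>*a + \<delta>^2"
    unfolding e2 norm_axis_sq by (simp add: a_def algebra_simps)
  have key: "(- 2*\<delta>*a + \<delta>^2)/(2*\<mu>) < - \<delta>"
  proof -
    have "- 2*\<delta>*a + \<delta>^2 = - \<delta> * (a + \<mu>)" by (simp add: \<delta>_def power2_eq_square algebra_simps)
    moreover have "\<delta> * (a + \<mu>) > \<delta> * (2*\<mu>)" using d0 a by (intro mult_strict_left_mono) auto
    ultimately show ?thesis using m by (simp add: field_simps)
  qed
  have "Fm \<eta> \<mu> u w' = infnorm (w' - xstar \<eta>) + 1/(2*\<mu>) * ((norm (u - w))^2 + (- 2*\<delta>*a + \<delta>^2))"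
    unfolding Fm_def n1 by simp
  also have "\<dots> = infnorm (w' - xstar \<eta>) + 1/(2*\<mu>) * (norm (u - w))^2 + (- 2*\<delta>*a + \<delta>^2)/(2*\<mu>)"
    by (simp add: distrib_left)
  also have "\<dots> < Fm \<eta> \<mu> u w" unfolding Fm_def using i1 key by linarith
  finally show False using w[rule_format, of w'] by linarith
qed

lemma Fm_zero:
  fixes u w :: "real^'n::{finite,linorder}"
  assumes m: "\<mu> > 0" and x0: "0 \<le> xstar \<eta> $ j" and xj: "xstar \<eta> $ j \<le> infnorm (w - xstar \<eta>)"
  shows "Fm \<eta> \<mu> (u + (- u$j) *\<^sub>R axis j 1) (w + (- w$j) *\<^sub>R axis j 1) \<le> Fm \<eta> \<mu> u w - (u$j - w$j)^2/(2*\<mu>)"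
proof -
  have i1: "infnorm (w + (- w$j) *\<^sub>R axis j 1 - xstar \<eta>) \<le> infnorm (w - xstar \<eta>)"
  proof (rule infnorm_le_cart)
    fix k
    show "\<bar>(w + (- w$j) *\<^sub>R axis j 1 - xstar \<eta>) $ k\<bar> \<le> infnorm (w - xstar \<eta>)"
    proof (cases "k = j")
      case True then show ?thesis using x0 xj by (simp add: axis_def)
    next
      case False
      then show ?thesis using component_le_infnorm_cart[of "w - xstar \<eta>" k] by (simp add: axis_def)
    qed
  qed
  have e2: "u + (- u$j) *\<^sub>R axis j 1 - (w + (- w$j) *\<^sub>R axis j 1) = (u - w) + (-(u$j - w$j)) *\<^sub>R axis j 1"
    by (simp add: algebra_simps)
  have n1: "(norm (u + (- u$j) *\<^sub>R axis j 1 - (w + (- w$j) *\<^sub>R axis j 1)))^2 = (norm (u - w))^2 - (u$j - w$j)^2"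
    unfolding e2 norm_axis_sq by (simp add: power2_eq_square algebra_simps)
  show ?thesis unfolding Fm_def n1 using i1 m by (simp add: field_simps)
qed

lemma dmu_axis:
  fixes v :: "real^'n::{finite,linorder}"
  shows "dmu \<mu> (v + c *\<^sub>R axis i 1) = dmu \<mu> v + \<mu>/2 * (2 * c * v$i + c^2) + phimu \<mu> (v$i + c) - phimu \<mu> (v$i)"
proof -
  have "(\<Sum>k\<in>UNIV. phimu \<mu> ((v + c *\<^sub>R axis i 1)$k)) = (\<Sum>k\<in>UNIV. phimu \<mu> (v$k) + (if k = i then phimu \<mu> (v$i + c) - phimu \<mu> (v$i) else 0))"
    by (rule sum.cong) (auto simp: axis_def)
  also have "\<dots> = (\<Sum>k\<in>UNIV. phimu \<mu> (v$k)) + (phimu \<mu> (v$i + c) - phimu \<mu> (v$i))"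
    by (simp add: sum.distrib)
  finally show ?thesis unfolding dmu_def norm_axis_sq by (simp add: algebra_simps)
qed

lemma young:
  fixes v k :: "'a::real_inner"
  assumes m: "m > 0"
  shows "inner v k - m/2 * (norm v)^2 \<le> 1/(2*m) * (norm k)^2"
proof -
  have "0 \<le> (norm (m *\<^sub>R v - k))^2" by simp
  also have "\<dots> = m^2 * (norm v)^2 - 2*m*inner v k + (norm k)^2"
    unfolding power2_norm_eq_inner by (simp add: inner_simps inner_commute power2_eq_square algebra_simps)
  finally have "2*m*inner v k \<le> m^2 * (norm v)^2 + (norm k)^2" by simp
  hence "(2*m*inner v k)/(2*m) \<le> (m^2 * (norm v)^2 + (norm k)^2)/(2*m)" using m by (intro divide_right_mono) auto
  then show ?thesis using m by (simp add: field_simps power2_eq_square)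
qed



lemma fmu_grad:
  assumes m: "\<mu> > 0" and w: "\<forall>w'. Fm \<eta> \<mu> u w \<le> Fm \<eta> \<mu> u w'"
  shows "has_gradient (fmu \<eta> \<mu>) ((1/\<mu>) *\<^sub>R (u - w)) u"
  by (rule grad_from_bound[where C="1/(2*\<mu>)"]) (use m fmu_bound[OF m w] in auto)

lemma f_d_bound:
  fixes u :: "real^'n::{finite,linorder}"
  assumes m: "\<mu> > 0" and w: "\<forall>w'. Fm \<eta> \<mu> u w \<le> Fm \<eta> \<mu> u w'"
  shows "\<bar>(fmu \<eta> \<mu> (u+k) + dmu \<mu> (u+k)) - (fmu \<eta> \<mu> u + dmu \<mu> u) - inner ((1/\<mu>) *\<^sub>R (u - w) + gd \<mu> u) k\<bar>
     \<le> (1/(2*\<mu>) + (\<mu>/2 + 1/(2*\<mu>))) * (norm k)^2"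
proof -
  have a: "\<bar>fmu \<eta> \<mu> (u+k) - fmu \<eta> \<mu> u - inner ((1/\<mu>) *\<^sub>R (u - w)) k\<bar> \<le> 1/(2*\<mu>) * (norm k)^2"
    by (rule fmu_bound[OF m w])
  have b: "\<bar>dmu \<mu> (u+k) - dmu \<mu> u - inner (gd \<mu> u) k\<bar> \<le> (\<mu>/2 + 1/(2*\<mu>)) * (norm k)^2"
    by (rule d_grad[OF m])
  have e: "inner ((1/\<mu>) *\<^sub>R (u - w) + gd \<mu> u) k = inner ((1/\<mu>) *\<^sub>R (u - w)) k + inner (gd \<mu> u) k"
    by (simp only: inner_add_left)
  show ?thesis unfolding e using a b by (simp add: algebra_simps abs_le_iff)
qed

lemma h_grad:
  fixes u :: "real^'n::{finite,linorder}"
  assumes L: "L > 0" and m: "\<mu> > 0" and w: "\<forall>w'. Fm \<eta> \<mu> u w \<le> Fm \<eta> \<mu> u w'"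
  shows "has_gradient (hmu L \<eta> \<mu>) ((1/L) *\<^sub>R ((1/\<mu>) *\<^sub>R (u - w) + gd \<mu> u)) u"
proof (rule grad_from_bound[where C="(1/L) * (1/(2*\<mu>) + (\<mu>/2 + 1/(2*\<mu>)))"])
  show "0 \<le> (1/L) * (1/(2*\<mu>) + (\<mu>/2 + 1/(2*\<mu>)))" using L m by simp
  fix k
  have b: "\<bar>(fmu \<eta> \<mu> (u+k) + dmu \<mu> (u+k)) - (fmu \<eta> \<mu> u + dmu \<mu> u) - inner ((1/\<mu>) *\<^sub>R (u - w) + gd \<mu> u) k\<bar>
     \<le> (1/(2*\<mu>) + (\<mu>/2 + 1/(2*\<mu>))) * (norm k)^2" by (rule f_d_bound[OF m w])
  have e: "hmu L \<eta> \<mu> (u + k) - hmu L \<eta> \<mu> u - inner ((1/L) *\<^sub>R ((1/\<mu>) *\<^sub>R (u - w) + gd \<mu> u)) k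
    = (1/L) * ((fmu \<eta> \<mu> (u+k) + dmu \<mu> (u+k)) - (fmu \<eta> \<mu> u + dmu \<mu> u) - inner ((1/\<mu>) *\<^sub>R (u - w) + gd \<mu> u) k)"
    unfolding hmu_def inner_scaleR_left by (simp add: algebra_simps)
  show "\<bar>hmu L \<eta> \<mu> (u + k) - hmu L \<eta> \<mu> u - inner ((1/L) *\<^sub>R ((1/\<mu>) *\<^sub>R (u - w) + gd \<mu> u)) k\<bar>
    \<le> (1/L) * (1/(2*\<mu>) + (\<mu>/2 + 1/(2*\<mu>))) * (norm k)^2"
    unfolding e using b L by (auto simp: abs_mult intro!: divide_right_mono)
qed

lemma Phi_grad:
  fixes u x :: "real^'n::{finite,linorder}"
  assumes m: "\<mu> > 0" and w: "\<forall>w'. Fm \<eta> \<mu> u w \<le> Fm \<eta> \<mu> u w'"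
  shows "has_gradient (\<lambda>u. fmu \<eta> \<mu> u + dmu \<mu> u - L * inner x u) ((1/\<mu>) *\<^sub>R (u - w) + gd \<mu> u - L *\<^sub>R x) u"
proof (rule grad_from_bound[where C="1/(2*\<mu>) + (\<mu>/2 + 1/(2*\<mu>))"])
  show "0 \<le> 1/(2*\<mu>) + (\<mu>/2 + 1/(2*\<mu>))" using m by simp
  fix k
  have b: "\<bar>(fmu \<eta> \<mu> (u+k) + dmu \<mu> (u+k)) - (fmu \<eta> \<mu> u + dmu \<mu> u) - inner ((1/\<mu>) *\<^sub>R (u - w) + gd \<mu> u) k\<bar>
     \<le> (1/(2*\<mu>) + (\<mu>/2 + 1/(2*\<mu>))) * (norm k)^2" by (rule f_d_bound[OF m w])
  have e: "(fmu \<eta> \<mu> (u+k) + dmu \<mu> (u+k) - L * inner x (u+k)) - (fmu \<eta> \<mu> u + dmu \<mu> u - L * inner x u) - inner ((1/\<mu>) *\<^sub>R (u - w) + gd \<mu> u - L *\<^sub>R x) k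
    = (fmu \<eta> \<mu> (u+k) + dmu \<mu> (u+k)) - (fmu \<eta> \<mu> u + dmu \<mu> u) - inner ((1/\<mu>) *\<^sub>R (u - w) + gd \<mu> u) k"
    by (simp add: inner_add_right inner_diff_left inner_commute algebra_simps)
  show "\<bar>(fmu \<eta> \<mu> (u+k) + dmu \<mu> (u+k) - L * inner x (u+k)) - (fmu \<eta> \<mu> u + dmu \<mu> u - L * inner x u) - inner ((1/\<mu>) *\<^sub>R (u - w) + gd \<mu> u - L *\<^sub>R x) k\<bar>
     \<le> (1/(2*\<mu>) + (\<mu>/2 + 1/(2*\<mu>))) * (norm k)^2"
    unfolding e by (rule b)
qed



theorem proposition3p7:
  fixes L \<mu> \<eta> :: real and p :: nat and x :: "real^'n::{finite,linorder}"
  assumes "L > 0" and "0 < \<mu>" and "\<mu> < 1"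
    and "\<eta> > 4 * \<mu> * (real CARD('n))^2"
    and "p < CARD('n)"
    and "x \<in> Esp p"
  shows "(\<exists>g. has_gradient (fmu \<eta> \<mu>) g x \<and> g \<in> Esp (p + 1))
       \<and> (\<exists>g. has_gradient (hmu L \<eta> \<mu>) g x \<and> g \<in> Esp (p + 1))
       \<and> (\<exists>g. has_gradient (convex_conj (hmu L \<eta> \<mu>)) g x \<and> g \<in> Esp (p + 1))"
proof -
  note L0 = assms(1) and m = assms(2) and eta = assms(4) and pn = assms(5) and xE = assms(6)
  define X where "X = (xstar \<eta> :: real^'n::{finite,linorder})"
  have x0: "\<And>i. p \<le> pos i \<Longrightarrow> x$i = 0" using xE by (simp add: Esp_def)
  have gapj: "\<exists>ip. pos ip = p \<and> X$j \<le> X$ip - 2*\<mu> \<and> 0 \<le> X$j" if j: "p+1 \<le> pos j" for j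
  proof -
    obtain ip :: 'n where ip: "pos ip = p" using pos_surj[OF pn] by blast
    show ?thesis using gap[OF m eta ip j] ip by (auto simp: X_def)
  qed
  have big: "X$j \<le> infnorm (w - X)" if ip: "X$j \<le> X$ip - 2*\<mu>" and wi: "w$ip \<le> 2*\<mu>" for j ip and w :: "real^'n::{finite,linorder}"
  proof -
    have "X$ip - w$ip \<le> \<bar>(w - X)$ip\<bar>" by (auto simp: abs_if)
    then show ?thesis using component_le_infnorm_cart[of "w - X" ip] ip wi by linarith
  qed
  have Esp_add: "a + b \<in> Esp q" if "a \<in> Esp q" "b \<in> Esp q" for a b :: "real^'n::{finite,linorder}" and q
    using that by (simp add: Esp_def)
  have Esp_scale: "c *\<^sub>R a \<in> Esp q" if "a \<in> Esp q" for a :: "real^'n::{finite,linorder}" and q c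
    using that by (simp add: Esp_def)

  obtain w where w: "\<forall>w'. Fm \<eta> \<mu> x w \<le> Fm \<eta> \<mu> x w'" using prox_exists[OF m] by blast
  have wz: "w$j = 0" if j: "p+1 \<le> pos j" for j
  proof (rule ccontr)
    assume nz: "w$j \<noteq> 0"
    obtain ip where ip: "pos ip = p" "X$j \<le> X$ip - 2*\<mu>" "0 \<le> X$j" using gapj[OF j] by blast
    have "w$ip \<le> x$ip + \<mu>" by (rule prox_coord[OF m w])
    hence "w$ip \<le> 2*\<mu>" using x0[of ip] ip(1) m by simp
    hence b: "X$j \<le> infnorm (w - X)" using big ip(2) by blast
    have F: "Fm \<eta> \<mu> (x + (- x$j) *\<^sub>R axis j 1) (w + (- w$j) *\<^sub>R axis j 1) \<le> Fm \<eta> \<mu> x w - (x$j - w$j)^2/(2*\<mu>)"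
      by (rule Fm_zero[OF m]) (use ip(3) b in \<open>auto simp: X_def\<close>)
    have xj: "x$j = 0" using x0 j by simp
    have "(x$j - w$j)^2/(2*\<mu>) > 0" using nz xj m by simp
    hence "Fm \<eta> \<mu> x (w + (- w$j) *\<^sub>R axis j 1) < Fm \<eta> \<mu> x w" using F xj by simp
    then show False using w by (meson not_le)
  qed
  define gf where "gf = (1/\<mu>) *\<^sub>R (x - w)"
  have gfE: "gf \<in> Esp (p+1)" unfolding Esp_def gf_def using x0 wz by simp
  have gfgrad: "has_gradient (fmu \<eta> \<mu>) gf x" unfolding gf_def by (rule fmu_grad[OF m w])
  have P1: "\<exists>g. has_gradient (fmu \<eta> \<mu>) g x \<and> g \<in> Esp (p + 1)" using gfgrad gfE by blast

  have gdE: "gd \<mu> x \<in> Esp (p+1)" unfolding Esp_def gd_def dphi_def using x0 m by auto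
  have P2: "\<exists>g. has_gradient (hmu L \<eta> \<mu>) g x \<and> g \<in> Esp (p + 1)"
    using h_grad[OF L0 m w] gfE gdE Esp_add Esp_scale unfolding gf_def by blast

  define Phi where "Phi = (\<lambda>u. fmu \<eta> \<mu> u + dmu \<mu> u - L * inner x u)"
  have Phigrad: "\<exists>g. has_gradient Phi g u" for u
  proof -
    obtain wu where wu: "\<forall>w'. Fm \<eta> \<mu> u wu \<le> Fm \<eta> \<mu> u w'" using prox_exists[OF m] by blast
    show ?thesis unfolding Phi_def using Phi_grad[OF m wu] by blast
  qed
  have cont: "continuous_on UNIV Phi"
  proof (rule continuous_at_imp_continuous_on, rule ballI)
    fix u :: "real^'n::{finite,linorder}"
    obtain g where "has_gradient Phi g u" using Phigrad by blast
    then show "isCont Phi u" unfolding has_gradient_def by (rule has_derivative_continuous)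
  qed
  define c where "c = Phi 0"
  define R where "R = 2 * (L * norm x + \<bar>c\<bar> + 1) / \<mu> + 1"
  have R1: "R \<ge> 1" using m L0 by (simp add: R_def)
  have far: "Phi u > c" if u: "norm u > R" for u
  proof -
    have f0: "fmu \<eta> \<mu> u \<ge> 0" by (rule fmu_nonneg[OF m])
    have s0: "(\<Sum>i\<in>UNIV. phimu \<mu> (u$i)) \<ge> 0" by (rule sum_nonneg) (simp add: phi_nonneg[OF m])
    have cs: "L * inner x u \<le> L * (norm x * norm u)"
      using L0 by (intro mult_left_mono norm_cauchy_schwarz) auto
    have P: "Phi u \<ge> \<mu>/2 * (norm u)^2 - L * (norm x * norm u)" unfolding Phi_def dmu_def using f0 s0 cs by linarith
    have "norm u \<ge> 2 * (L * norm x + \<bar>c\<bar> + 1) / \<mu>" using u by (simp add: R_def)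
    hence nu: "\<mu>/2 * norm u \<ge> L * norm x + \<bar>c\<bar> + 1" using m by (simp add: field_simps)
    have n1: "norm u \<ge> 1" using u R1 by simp
    have eq: "\<mu>/2 * (norm u)^2 - L * (norm x * norm u) = norm u * (\<mu>/2 * norm u - L * norm x)"
      by (simp add: power2_eq_square algebra_simps)
    have A: "norm u * (\<mu>/2 * norm u - L * norm x) \<ge> norm u * (\<bar>c\<bar> + 1)"
      using nu by (intro mult_left_mono) auto
    have B: "norm u * (\<bar>c\<bar> + 1) \<ge> 1 * (\<bar>c\<bar> + 1)" using n1 by (intro mult_right_mono) auto
    have "c < 1 * (\<bar>c\<bar> + 1)" by simp
    also have "\<dots> \<le> norm u * (\<bar>c\<bar> + 1)" by (rule B)
    also have "\<dots> \<le> norm u * (\<mu>/2 * norm u - L * norm x)" by (rule A)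
    also have "\<dots> = \<mu>/2 * (norm u)^2 - L * (norm x * norm u)" by (rule eq[symmetric])
    also have "\<dots> \<le> Phi u" by (rule P)
    finally show ?thesis .
  qed
  have ne: "cball (0::real^'n::{finite,linorder}) R \<noteq> {}" using R1 by auto
  obtain u0 where u0: "u0 \<in> cball 0 R" "\<forall>y\<in>cball 0 R. Phi u0 \<le> Phi y"
    using continuous_attains_inf[OF compact_cball ne continuous_on_subset[OF cont]] by blast
  have u0min: "Phi u0 \<le> Phi y" for y
  proof (cases "y \<in> cball 0 R")
    case True then show ?thesis using u0 by blast
  next
    case False
    hence "Phi y > c" using far by simp
    moreover have "Phi u0 \<le> c" using u0(2) R1 by (simp add: c_def)
    ultimately show ?thesis by simp
  qed
  obtain w0 where w0: "\<forall>w'. Fm \<eta> \<mu> u0 w0 \<le> Fm \<eta> \<mu> u0 w'" using prox_exists[OF m] by blast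
  define g0 where "g0 = (1/\<mu>) *\<^sub>R (u0 - w0) + gd \<mu> u0 - L *\<^sub>R x"
  have "has_gradient Phi g0 u0" unfolding Phi_def g0_def by (rule Phi_grad[OF m w0])
  hence "inner g0 = (\<lambda>v. 0)"
    using differential_zero_maxmin[of u0 UNIV Phi "inner g0"] u0min unfolding has_gradient_def by auto
  hence "inner g0 g0 = 0" by metis
  hence "g0 = 0" by simp
  hence hx: "(1/\<mu>) *\<^sub>R (u0 - w0) + gd \<mu> u0 = L *\<^sub>R x" unfolding g0_def by simp

  have ua: "u0$i \<le> \<mu>" if i: "p \<le> pos i" for i
  proof (rule ccontr)
    assume neg: "\<not> u0$i \<le> \<mu>"
    define a where "a = u0$i"
    define \<delta> where "\<delta> = a - \<mu>"
    have a: "a > \<mu>" using neg by (simp add: a_def)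
    have d0: "\<delta> > 0" using a by (simp add: \<delta>_def)
    define u' where "u' = u0 + (-\<delta>) *\<^sub>R axis i 1"
    define w' where "w' = w0 + (-\<delta>) *\<^sub>R axis i 1"
    have e1: "u' - w' = u0 - w0" by (simp add: u'_def w'_def)
    have e2: "w' - xstar \<eta> = (w0 - xstar \<eta>) + (-\<delta>) *\<^sub>R axis i 1" by (simp add: w'_def algebra_simps)
    have "infnorm (w' - xstar \<eta>) \<le> infnorm (w0 - xstar \<eta>) + \<delta>"
      unfolding e2 using infnorm_axis_shift[of "w0 - xstar \<eta>" "-\<delta>" i] d0 by simp
    hence F1: "Fm \<eta> \<mu> u' w' \<le> Fm \<eta> \<mu> u0 w0 + \<delta>" unfolding Fm_def e1 by simp
    have D1: "dmu \<mu> u' = dmu \<mu> u0 + \<mu>/2 * (2 * (-\<delta>) * u0$i + (-\<delta>)^2) + phimu \<mu> (u0$i + (-\<delta>)) - phimu \<mu> (u0$i)"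
      unfolding u'_def by (rule dmu_axis)
    have ph: "phimu \<mu> (u0$i + (-\<delta>)) - phimu \<mu> (u0$i) = - \<delta>"
      using a by (simp add: phimu_def \<delta>_def a_def)
    have qe: "2 * (-\<delta>) * u0$i + (-\<delta>)^2 = -(\<delta> * (a + \<mu>))" by (simp add: \<delta>_def a_def power2_eq_square algebra_simps)
    have "\<delta> * (a + \<mu>) > 0" using d0 a m by simp
    hence q: "\<mu>/2 * (2 * (-\<delta>) * u0$i + (-\<delta>)^2) < 0" unfolding qe using m by (simp add: mult_pos_pos)
    have I1: "inner x u' = inner x u0" unfolding u'_def using x0[OF i] by (simp add: inner_diff_right inner_add_right inner_axis)
    have "Phi u' \<le> Fm \<eta> \<mu> u' w' + dmu \<mu> u' - L * inner x u'" unfolding Phi_def using fmu_le[OF m] by simp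
    also have "\<dots> < Fm \<eta> \<mu> u0 w0 + dmu \<mu> u0 - L * inner x u0" unfolding I1 using F1 D1 ph q by linarith
    also have "\<dots> = Phi u0" unfolding Phi_def using fmu_eq[OF w0] by simp
    finally show False using u0min[of u'] by simp
  qed

  have u0z: "u0$j = 0" if j: "p+1 \<le> pos j" for j
  proof (rule ccontr)
    assume nz: "u0$j \<noteq> 0"
    obtain ip where ip: "pos ip = p" "X$j \<le> X$ip - 2*\<mu>" "0 \<le> X$j" using gapj[OF j] by blast
    have "w0$ip \<le> u0$ip + \<mu>" by (rule prox_coord[OF m w0])
    moreover have "u0$ip \<le> \<mu>" using ua[of ip] ip(1) by simp
    ultimately have "w0$ip \<le> 2*\<mu>" by simp
    hence b: "X$j \<le> infnorm (w0 - X)" using big ip(2) by blast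
    define u' where "u' = u0 + (- u0$j) *\<^sub>R axis j 1"
    define w' where "w' = w0 + (- w0$j) *\<^sub>R axis j 1"
    have F: "Fm \<eta> \<mu> u' w' \<le> Fm \<eta> \<mu> u0 w0 - (u0$j - w0$j)^2/(2*\<mu>)"
      unfolding u'_def w'_def by (rule Fm_zero[OF m]) (use ip(3) b in \<open>auto simp: X_def\<close>)
    have F2: "(u0$j - w0$j)^2/(2*\<mu>) \<ge> 0" using m by simp
    have D1: "dmu \<mu> u' = dmu \<mu> u0 + \<mu>/2 * (2 * (- u0$j) * u0$j + (- u0$j)^2) + phimu \<mu> (u0$j + (- u0$j)) - phimu \<mu> (u0$j)"
      unfolding u'_def by (rule dmu_axis)
    have p0: "phimu \<mu> (u0$j + (- u0$j)) = 0" using m by (simp add: phimu_def)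
    have pn: "phimu \<mu> (u0$j) \<ge> 0" by (rule phi_nonneg[OF m])
    have qe: "2 * (- u0$j) * u0$j + (- u0$j)^2 = - (u0$j * u0$j)" by (simp add: power2_eq_square)
    have "u0$j * u0$j > 0" using nz not_real_square_gt_zero by blast
    hence q: "\<mu>/2 * (2 * (- u0$j) * u0$j + (- u0$j)^2) < 0" unfolding qe using m by (simp add: mult_pos_pos)
    have I1: "inner x u' = inner x u0" unfolding u'_def using x0[of j] j by (simp add: inner_diff_right inner_add_right inner_axis)
    have "Phi u' \<le> Fm \<eta> \<mu> u' w' + dmu \<mu> u' - L * inner x u'" unfolding Phi_def using fmu_le[OF m] by simp
    also have "\<dots> < Fm \<eta> \<mu> u0 w0 + dmu \<mu> u0 - L * inner x u0" unfolding I1 using F F2 D1 p0 pn q by linarith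
    also have "\<dots> = Phi u0" unfolding Phi_def using fmu_eq[OF w0] by simp
    finally show False using u0min[of u'] by simp
  qed
  have u0E: "u0 \<in> Esp (p+1)" unfolding Esp_def using u0z by auto

  have htan: "hmu L \<eta> \<mu> u \<ge> hmu L \<eta> \<mu> u0 + inner x (u - u0) + \<mu>/(2*L) * (norm (u - u0))^2" for u
  proof -
    have ft: "fmu \<eta> \<mu> u \<ge> fmu \<eta> \<mu> u0 + inner ((1/\<mu>) *\<^sub>R (u0 - w0)) (u - u0)" by (rule fmu_tangent[OF m w0])
    have dt: "dmu \<mu> (u0 + (u - u0)) \<ge> dmu \<mu> u0 + inner (gd \<mu> u0) (u - u0) + \<mu>/2 * (norm (u - u0))^2" by (rule d_tangent[OF m])
    have "inner ((1/\<mu>) *\<^sub>R (u0 - w0) + gd \<mu> u0) (u - u0) = inner (L *\<^sub>R x) (u - u0)" by (simp only: hx)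
    hence s: "inner ((1/\<mu>) *\<^sub>R (u0 - w0)) (u - u0) + inner (gd \<mu> u0) (u - u0) = L * inner x (u - u0)"
      by (simp only: inner_add_left inner_scaleR_left)
    have hu: "L * hmu L \<eta> \<mu> u = fmu \<eta> \<mu> u + dmu \<mu> u" unfolding hmu_def using L0 by simp
    have hu0: "L * hmu L \<eta> \<mu> u0 = fmu \<eta> \<mu> u0 + dmu \<mu> u0" unfolding hmu_def using L0 by simp
    have "L * hmu L \<eta> \<mu> u \<ge> L * hmu L \<eta> \<mu> u0 + L * inner x (u - u0) + \<mu>/2 * (norm (u - u0))^2"
      using ft dt s hu hu0 by simp
    also have "L * hmu L \<eta> \<mu> u0 + L * inner x (u - u0) + \<mu>/2 * (norm (u - u0))^2
       = L * (hmu L \<eta> \<mu> u0 + inner x (u - u0) + \<mu>/(2*L) * (norm (u - u0))^2)"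
      using L0 by (simp add: field_simps)
    finally show ?thesis using L0 by simp
  qed

  define c0 where "c0 = inner u0 x - hmu L \<eta> \<mu> u0"
  have cb: "inner u y - hmu L \<eta> \<mu> u \<le> c0 + inner u0 (y - x) + L/(2*\<mu>) * (norm (y - x))^2" for u y
  proof -
    have y1: "inner (u - u0) (y - x) - (\<mu>/L)/2 * (norm (u - u0))^2 \<le> 1/(2*(\<mu>/L)) * (norm (y - x))^2"
      by (rule young) (use m L0 in simp)
    have e1: "(\<mu>/L)/2 = \<mu>/(2*L)" by simp
    have e2: "1/(2*(\<mu>/L)) = L/(2*\<mu>)" by simp
    have e3: "inner u y - inner x (u - u0) = inner u0 x + inner u0 (y - x) + inner (u - u0) (y - x)"
      by (simp add: inner_diff_left inner_diff_right inner_commute)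
    show ?thesis using htan[of u] y1 e3 unfolding c0_def e1 e2 by linarith
  qed
  have bdd: "bdd_above (range (\<lambda>u. inner u y - hmu L \<eta> \<mu> u))" for y :: "real^'n::{finite,linorder}"
    by (rule bdd_aboveI2) (rule cb)
  have cx: "convex_conj (hmu L \<eta> \<mu>) x = c0"
    unfolding convex_conj_def
  proof (rule cSup_eq_maximum)
    show "c0 \<in> range (\<lambda>u. inner u x - hmu L \<eta> \<mu> u)" unfolding c0_def by auto
    fix z assume "z \<in> range (\<lambda>u. inner u x - hmu L \<eta> \<mu> u)"
    then obtain u where "z = inner u x - hmu L \<eta> \<mu> u" by auto
    then show "z \<le> c0" using cb[of u x] by simp
  qed
  have cbound: "\<bar>convex_conj (hmu L \<eta> \<mu>) (x + k) - convex_conj (hmu L \<eta> \<mu>) x - inner u0 k\<bar> \<le> L/(2*\<mu>) * (norm k)^2" for k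
  proof -
    have up: "convex_conj (hmu L \<eta> \<mu>) (x + k) \<le> c0 + inner u0 k + L/(2*\<mu>) * (norm k)^2"
      unfolding convex_conj_def by (rule cSUP_least) (use cb[of _ "x + k"] in auto)
    have lo: "convex_conj (hmu L \<eta> \<mu>) (x + k) \<ge> inner u0 (x + k) - hmu L \<eta> \<mu> u0"
      unfolding convex_conj_def by (rule cSUP_upper[OF UNIV_I bdd])
    have "inner u0 (x + k) - hmu L \<eta> \<mu> u0 = c0 + inner u0 k" unfolding c0_def by (simp add: inner_add_right)
    moreover have "L/(2*\<mu>) * (norm k)^2 \<ge> 0" using L0 m by simp
    ultimately show ?thesis using up lo cx by (simp add: abs_le_iff)
  qed
  have cgrad: "has_gradient (convex_conj (hmu L \<eta> \<mu>)) u0 x"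
    by (rule grad_from_bound[where C="L/(2*\<mu>)"]) (use L0 m cbound in auto)
  show ?thesis using P1 P2 cgrad u0E by blast
qed

end
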